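(* Let $X$ be a complex Banach space and let $(Q,V)$ be a bounded symmetric pair of $X$. Let $V_0\subset V^Q$ be a closed linear subspace. Let $h\in\{1,-1\}$ and $c\ge0$. Let $\alpha$ be a closed linear subspace of $V$ that is positive semi-definite with respect to $hQ$, and let $\beta$ be a closed linear subspace of $V$ that is negative definite with respect to $hQ$, with $V_0=\beta^{Q|_\beta}$ and $\gamma(Q|_\beta)>0$. Assume that $V=\alpha\oplus\beta$ is a $Q$-orthogonal direct sum decomposition. Then there is $\varepsilon>0$ such that for every bounded symmetric pair $(R,W)$ of $X$ and every closed linear subspace $W_0\subset W^R$ with $\hat\delta(V,W)<\varepsilon$, $\delta(V_0,W_0)<\varepsilon$ and $\delta_c(Q,R)<\varepsilon$, we have $$m^+(hR)+\dim W^R/W_0\le \dim\alpha.$$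
   Context: A bounded symmetric pair $(Q,V)$ consists of a closed subspace $V\subset X$ and a Hermitian sesquilinear form $Q\colon V\times V\to\mathbb{C}$ with $\sup_{x,y\in V\setminus\{0\}}|Q(x,y)|/(\|x\|\|y\|)<\infty$. For a subset $\lambda\subset V$, $\lambda^Q:=\{u\in V: Q(u,v)=0\ \forall v\in\lambda\}$; in particular $V^Q$ is the radical of $Q$, and for a subspace $\beta\subset V$, $\beta^{Q|_\beta}:=\{u\in\beta: Q(u,v)=0\ \forall v\in\beta\}$. For a bounded semi-definite form $Q$ on $V$, $\gamma(Q):=\inf_{x\in V\setminus V^Q}|Q(x,x)|/\operatorname{dist}(x,V^Q)^2$ (and $0$ if $V=\{0\}$). $m^+(hR)$ is the supremum of the dimensions of subspaces of $W$ on which $hR$ is positive definite. $Q$-orthogonal means $Q(a,b)=0$ for $a\in\alpha$, $b\in\beta$. For linear subspaces $A,B$: $\delta(A,B):=\sup_{u\in A,\|u\|=1}\operatorname{dist}(u,B)$ ($0$ if $A=\{0\}$), $\hat\delta(A,B):=\max\{\delta(A,B),\delta(B,A)\}$. For bounded symmetric pairs $(Q,V)$, $(R,W)$ and $c\ge0$, $\delta_c(Q,R)$ is the infimum of $\delta\ge0$ such that $|Q(x,y)-R(u,v)|\le\delta(\|u\|+\|x\|)(\|v\|+\|y\|)+c\big((\|u\|+\|x\|)\|v-y\|+\|u-x\|(\|v\|+\|y\|)\big)$ for all $x,y\in V$, $u,v\in W$. *)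

theory Defs
  imports "HOL-Analysis.Analysis" "HOL-Library.Extended_Nat"
begin

text \<open>HOL-Analysis has no complex vector spaces, so we introduce the class of complex
normed vector spaces as real normed vector spaces with a compatible complex scalar
multiplication, and complex Banach spaces as complete ones.\<close>

class cvector = real_vector +
  fixes scaleC :: "complex \<Rightarrow> 'a \<Rightarrow> 'a"
  assumes scaleC_add_right: "scaleC a (x + y) = scaleC a x + scaleC a y"
    and scaleC_add_left: "scaleC (a + b) x = scaleC a x + scaleC b x"
    and scaleC_scaleC: "scaleC a (scaleC b x) = scaleC (a * b) x"
    and scaleC_one: "scaleC 1 x = x"
    and scaleR_scaleC: "scaleR r x = scaleC (complex_of_real r) x"

class cnormed_vector = cvector + real_normed_vector +
  assumes norm_scaleC: "norm (scaleC a x) = cmod a * norm x"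

class cbanach = cnormed_vector + banach

definition csubspace :: "'a::cvector set \<Rightarrow> bool" where
  "csubspace S \<longleftrightarrow> 0 \<in> S \<and> (\<forall>x\<in>S. \<forall>y\<in>S. x + y \<in> S) \<and> (\<forall>a. \<forall>x\<in>S. scaleC a x \<in> S)"

definition closed_csubspace :: "'a::cnormed_vector set \<Rightarrow> bool" where
  "closed_csubspace S \<longleftrightarrow> csubspace S \<and> closed S"

text \<open>A finite set F is linearly independent modulo B (i.e. its image in the quotient
space is a linearly independent family of distinct vectors).\<close>
definition cindep_mod :: "'a::cvector set \<Rightarrow> 'a set \<Rightarrow> bool" where
  "cindep_mod B F \<longleftrightarrow> (\<forall>c. (\<Sum>x\<in>F. scaleC (c x) x) \<in> B \<longrightarrow> (\<forall>x\<in>F. c x = 0))"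

definition cdim_quot :: "'a::cvector set \<Rightarrow> 'a set \<Rightarrow> enat" where
  "cdim_quot A B = Sup {enat (card F) | F. finite F \<and> F \<subseteq> A \<and> cindep_mod B F}"

definition cdim :: "'a::cvector set \<Rightarrow> enat" where
  "cdim A = cdim_quot A {0}"

definition bounded_symmetric_pair :: "('a::cbanach \<Rightarrow> 'a \<Rightarrow> complex) \<Rightarrow> 'a set \<Rightarrow> bool" where
  "bounded_symmetric_pair Q V \<longleftrightarrow>
     closed_csubspace V \<and>
     (\<forall>x\<in>V. \<forall>y\<in>V. \<forall>z\<in>V. Q (x + y) z = Q x z + Q y z) \<and>
     (\<forall>a. \<forall>x\<in>V. \<forall>y\<in>V. Q (scaleC a x) y = a * Q x y) \<and>
     (\<forall>x\<in>V. \<forall>y\<in>V. Q x y = cnj (Q y x)) \<and>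
     (\<exists>C. \<forall>x\<in>V. \<forall>y\<in>V. cmod (Q x y) \<le> C * norm x * norm y)"

definition Qorth :: "('a \<Rightarrow> 'a \<Rightarrow> complex) \<Rightarrow> 'a set \<Rightarrow> 'a set \<Rightarrow> 'a set" where
  "Qorth Q V lam = {u \<in> V. \<forall>v\<in>lam. Q u v = 0}"

definition radical :: "('a \<Rightarrow> 'a \<Rightarrow> complex) \<Rightarrow> 'a set \<Rightarrow> 'a set" where
  "radical Q V = Qorth Q V V"

text \<open>gamma(Q) for a (semi-definite) form Q on V; infimum of the empty set is +\<infinity>.\<close>
definition gamma :: "('a::real_normed_vector \<Rightarrow> 'a \<Rightarrow> complex) \<Rightarrow> 'a set \<Rightarrow> ereal" where
  "gamma Q V = (if V = {0} then 0
     else Inf {ereal (cmod (Q x x) / (infdist x (radical Q V))\<^sup>2) | x. x \<in> V - radical Q V})"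

definition m_plus :: "real \<Rightarrow> ('a::cvector \<Rightarrow> 'a \<Rightarrow> complex) \<Rightarrow> 'a set \<Rightarrow> enat" where
  "m_plus h R W = Sup {cdim S | S. csubspace S \<and> S \<subseteq> W \<and> (\<forall>x\<in>S - {0}. h * Re (R x x) > 0)}"

definition gap :: "'a::real_normed_vector set \<Rightarrow> 'a set \<Rightarrow> real" where
  "gap A B = (if A \<subseteq> {0} then 0 else Sup {infdist u B | u. u \<in> A \<and> norm u = 1})"

definition gap_hat :: "'a::real_normed_vector set \<Rightarrow> 'a set \<Rightarrow> real" where
  "gap_hat A B = max (gap A B) (gap B A)"

definition delta_c :: "real \<Rightarrow> ('a::real_normed_vector \<Rightarrow> 'a \<Rightarrow> complex) \<Rightarrow> 'a set
    \<Rightarrow> ('a \<Rightarrow> 'a \<Rightarrow> complex) \<Rightarrow> 'a set \<Rightarrow> real" where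
  "delta_c c Q V R W = Inf {d. d \<ge> 0 \<and>
     (\<forall>x\<in>V. \<forall>y\<in>V. \<forall>u\<in>W. \<forall>v\<in>W.
        cmod (Q x y - R u v) \<le> d * (norm u + norm x) * (norm v + norm y)
          + c * ((norm u + norm x) * norm (v - y) + norm (u - x) * (norm v + norm y)))}"

end

theory Submission
  imports Defs
begin


lemma infdist_lessE:
  assumes "A \<noteq> {}" "infdist x A < e"
  obtains a where "a \<in> A" "dist x a < e"
proof -
  have "(INF a\<in>A. dist x a) < e" using assms by (simp add: infdist_def)
  then obtain a where "a \<in> A" "dist x a < e"
    using cInf_lessD[of "(\<lambda>a. dist x a) ` A" e] assms(1) by auto
  then show ?thesis using that by blast
qed

lemma infdist_geI:
  assumes "A \<noteq> {}" "\<And>a. a \<in> A \<Longrightarrow> r \<le> dist x a"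
  shows "r \<le> infdist x A"
  using assms by (simp add: infdist_def cINF_greatest)

lemma span_lower:
  fixes M :: "'a::real_normed_vector set"
  assumes "subspace M" "m \<in> M" "\<forall>y\<in>M. d \<le> norm (e - y)"
  shows "\<bar>l\<bar> * d \<le> norm (m + l *\<^sub>R e)"
proof (cases "l = 0")
  case True
  then have "d \<le> norm (e - 0)" using assms subspace_0 by blast
  then show ?thesis using True by simp
next
  case False
  have "(- (1/l)) *\<^sub>R m \<in> M" using assms subspace_scale by blast
  then have "d \<le> norm (e - (- (1/l)) *\<^sub>R m)" using assms by blast
  also have "e - (- (1/l)) *\<^sub>R m = (1/l) *\<^sub>R (m + l *\<^sub>R e)"
    using False by (simp add: algebra_simps)
  finally have "d \<le> norm (m + l *\<^sub>R e) / \<bar>l\<bar>" by simp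
  then show ?thesis using False by (simp add: field_simps)
qed

lemma closed_span_insert:
  fixes E :: "'a::real_normed_vector set"
  assumes cl: "closed (span E)" and e: "e \<notin> span E"
  shows "closed (span (insert e E))"
proof -
  let ?M = "span E"
  have d0: "0 < infdist e ?M" using infdist_pos_not_in_closed[OF cl _ e] span_zero by blast
  define d where "d = infdist e ?M"
  have dle: "\<forall>y\<in>?M. d \<le> norm (e - y)"
    unfolding d_def by (metis infdist_le dist_norm)
  have key: "\<bar>l\<bar> * d \<le> norm (m + l *\<^sub>R e)" if "m \<in> ?M" for m l
    using span_lower[OF subspace_span that dle] .
  show ?thesis unfolding closed_sequential_limits
  proof (intro allI impI)
    fix y yl assume H: "(\<forall>n. y n \<in> span (insert e E)) \<and> y \<longlonglongrightarrow> yl"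
    then have "\<forall>n. \<exists>k. y n - k *\<^sub>R e \<in> ?M" using span_breakdown_eq by blast
    then obtain k where k: "\<And>n. y n - k n *\<^sub>R e \<in> ?M" by metis
    have "Cauchy k"
    proof (rule metric_CauchyI)
      fix eps :: real assume "0 < eps"
      have "Cauchy y" using H LIMSEQ_imp_Cauchy by blast
      then obtain N where N: "\<forall>m\<ge>N. \<forall>n\<ge>N. dist (y m) (y n) < eps * d"
        using \<open>0 < eps\<close> d0 d_def metric_CauchyD[of y "eps*d"] by auto
      show "\<exists>N. \<forall>m\<ge>N. \<forall>n\<ge>N. dist (k m) (k n) < eps"
      proof (intro exI allI impI)
        fix m n assume "N \<le> m" "N \<le> n"
        have "(y m - k m *\<^sub>R e) - (y n - k n *\<^sub>R e) \<in> ?M" using k span_diff by blast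
        then have "\<bar>k m - k n\<bar> * d \<le> norm (((y m - k m *\<^sub>R e) - (y n - k n *\<^sub>R e)) + (k m - k n) *\<^sub>R e)"
          using key by blast
        also have "((y m - k m *\<^sub>R e) - (y n - k n *\<^sub>R e)) + (k m - k n) *\<^sub>R e = y m - y n"
          by (simp add: algebra_simps)
        also have "norm (y m - y n) < eps * d" using N \<open>N \<le> m\<close> \<open>N \<le> n\<close> by (simp add: dist_norm)
        finally show "dist (k m) (k n) < eps" using d0 d_def by (simp add: dist_real_def)
      qed
    qed
    then obtain kl where kl: "k \<longlonglongrightarrow> kl" using Cauchy_convergent_iff convergent_def by blast
    have "(\<lambda>n. y n - k n *\<^sub>R e) \<longlonglongrightarrow> yl - kl *\<^sub>R e"
      using H kl by (intro tendsto_intros) auto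
    then have "yl - kl *\<^sub>R e \<in> ?M" using closed_sequentially[OF cl, of "\<lambda>n. y n - k n *\<^sub>R e"] k by blast
    then show "yl \<in> span (insert e E)" using span_breakdown_eq by blast
  qed
qed

lemma closed_span_finite:
  fixes E :: "'a::real_normed_vector set"
  assumes "finite E" shows "closed (span E)"
  using assms
proof (induction E rule: finite_induct)
  case empty then show ?case by simp
next
  case (insert e E)
  show ?case
  proof (cases "e \<in> span E")
    case True
    then have "span (insert e E) = span E" by (rule span_redundant)
    then show ?thesis using insert by simp
  next
    case False then show ?thesis by (rule closed_span_insert[OF insert.IH])
  qed
qed



lemma riesz_step:
  fixes F :: "'a::real_normed_vector set"
  assumes "finite F" "x0 \<notin> span F"
  shows "\<exists>x. x \<in> span (insert x0 F) \<and> norm x = 1 \<and> (\<forall>y\<in>span F. 1/2 \<le> norm (x - y))"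
proof -
  have cl: "closed (span F)" using closed_span_finite assms(1) .
  have ne: "span F \<noteq> {}" using span_zero by blast
  define d where "d = infdist x0 (span F)"
  have d0: "0 < d" unfolding d_def using infdist_pos_not_in_closed[OF cl ne assms(2)] .
  have "infdist x0 (span F) < 2 * d" using d0 d_def by simp
  then obtain m0 where m0: "m0 \<in> span F" "dist x0 m0 < 2 * d" using infdist_lessE[OF ne] by blast
  define D where "D = norm (x0 - m0)"
  have "x0 \<noteq> m0" using m0 assms(2) by blast
  then have D0: "0 < D" unfolding D_def by simp
  have DD: "D < 2 * d" using m0 by (simp add: D_def dist_norm)
  define x where "x = (1/D) *\<^sub>R (x0 - m0)"
  have m0': "m0 \<in> span (insert x0 F)" using m0 span_mono[of F "insert x0 F"] by blast
  have "x \<in> span (insert x0 F)"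
    unfolding x_def by (rule span_scale[OF span_diff[OF span_base[OF insertI1] m0']])
  moreover have "norm x = 1" unfolding x_def using D0 by (simp add: D_def)
  moreover have "1/2 \<le> norm (x - y)" if y: "y \<in> span F" for y
  proof -
    have "m0 + D *\<^sub>R y \<in> span F" using y m0 by (intro span_add span_scale) auto
    then have "d \<le> dist x0 (m0 + D *\<^sub>R y)" unfolding d_def by (rule infdist_le)
    also have "dist x0 (m0 + D *\<^sub>R y) = D * norm (x - y)"
    proof -
      have "x0 - (m0 + D *\<^sub>R y) = D *\<^sub>R (x - y)" unfolding x_def using D0 by (simp add: algebra_simps)
      then show ?thesis using D0 by (simp add: dist_norm)
    qed
    finally have "d \<le> D * norm (x - y)" .
    show ?thesis
    proof (rule ccontr)
      assume "\<not> 1/2 \<le> norm (x - y)"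
      then have "D * norm (x - y) < D * (1/2)" using D0 by (intro mult_strict_left_mono) auto
      then show False using \<open>d \<le> D * norm (x - y)\<close> DD by linarith
    qed
  qed
  ultimately show ?thesis by blast
qed

lemma greedy:
  fixes E :: "'a::real_normed_vector set"
  assumes "finite E" "independent E" "m \<le> card E"
  shows "\<exists>e. \<forall>j<m. e j \<in> span E \<and> norm (e j) = 1 \<and> (\<forall>y\<in>span (e ` {..<j}). 1/2 \<le> norm (e j - y))"
  using assms(3)
proof (induction m)
  case 0 then show ?case by simp
next
  case (Suc m)
  then obtain e where e: "\<forall>j<m. e j \<in> span E \<and> norm (e j) = 1 \<and> (\<forall>y\<in>span (e ` {..<j}). 1/2 \<le> norm (e j - y))"
    by auto
  have "\<not> E \<subseteq> span (e ` {..<m})"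
  proof
    assume "E \<subseteq> span (e ` {..<m})"
    then have "card E \<le> card (e ` {..<m})" using independent_span_bound[of "e ` {..<m}" E] assms by auto
    also have "\<dots> \<le> m" using card_image_le[of "{..<m}" e] by simp
    finally show False using Suc by simp
  qed
  then obtain x0 where x0: "x0 \<in> E" "x0 \<notin> span (e ` {..<m})" by blast
  obtain x where x: "x \<in> span (insert x0 (e ` {..<m}))" "norm x = 1"
     "\<forall>y\<in>span (e ` {..<m}). 1/2 \<le> norm (x - y)"
    using riesz_step[of "e ` {..<m}" x0] x0 by auto
  have "insert x0 (e ` {..<m}) \<subseteq> span E" using x0 e span_base by auto
  then have "span (insert x0 (e ` {..<m})) \<subseteq> span E" using span_minimal subspace_span by blast
  with x have xE: "x \<in> span E" by blast
  define e' where "e' = e(m := x)"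
  have img: "e' ` {..<j} = e ` {..<j}" if "j \<le> m" for j
    using that unfolding e'_def by (auto simp: image_def)
  show ?case
  proof (intro exI allI impI)
    fix j assume "j < Suc m"
    then consider "j < m" | "j = m" by linarith
    then show "e' j \<in> span E \<and> norm (e' j) = 1 \<and> (\<forall>y\<in>span (e' ` {..<j}). 1/2 \<le> norm (e' j - y))"
    proof cases
      case 1 then show ?thesis using e img[of j] by (simp add: e'_def)
    next
      case 2 then show ?thesis using x xE img[of m] by (simp add: e'_def)
    qed
  qed
qed

lemma conditioning:
  fixes e :: "nat \<Rightarrow> 'a::real_normed_vector"
  assumes e: "\<forall>j<m. norm (e j) = 1 \<and> (\<forall>y\<in>span (e ` {..<j}). 1/2 \<le> norm (e j - y))"
  shows "\<forall>j<m. \<bar>r j\<bar> \<le> 2 * 3^m * norm (\<Sum>j<m. r j *\<^sub>R e j)"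
proof -
  define P where "P J = (\<Sum>j<J. r j *\<^sub>R e j)" for J
  have PS: "P J \<in> span (e ` {..<J})" for J
    unfolding P_def by (intro span_sum span_scale span_base) auto
  have A: "\<bar>r J\<bar> \<le> 2 * norm (P (Suc J))" if "J < m" for J
  proof -
    have "\<bar>r J\<bar> * (1/2) \<le> norm (P J + r J *\<^sub>R e J)"
      using span_lower[OF subspace_span PS] e that by blast
    then show ?thesis by (simp add: P_def)
  qed
  have Bd: "norm (P J) \<le> 3 * norm (P (Suc J))" if "J < m" for J
  proof -
    have "P J = P (Suc J) - r J *\<^sub>R e J" by (simp add: P_def)
    then have "norm (P J) \<le> norm (P (Suc J)) + \<bar>r J\<bar> * norm (e J)"
      by (metis norm_scaleR norm_triangle_ineq4)
    then show ?thesis using A[OF that] e that by simp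
  qed
  have C: "norm (P (m - k)) \<le> 3^k * norm (P m)" if "k \<le> m" for k
    using that
  proof (induction k)
    case 0 then show ?case by simp
  next
    case (Suc k)
    have "m - Suc k < m" "Suc (m - Suc k) = m - k" using Suc by auto
    then have "norm (P (m - Suc k)) \<le> 3 * norm (P (m - k))" using Bd by metis
    also have "\<dots> \<le> 3 * (3^k * norm (P m))" using Suc by simp
    finally show ?case by simp
  qed
  show ?thesis
  proof (intro allI impI)
    fix j assume j: "j < m"
    have "\<bar>r j\<bar> \<le> 2 * norm (P (Suc j))" using A j by blast
    also have "P (Suc j) = P (m - (m - Suc j))" using j by simp
    also have "2 * norm \<dots> \<le> 2 * (3^(m - Suc j) * norm (P m))" using C[of "m - Suc j"] by simp
    also have "\<dots> \<le> 2 * (3^m * norm (P m))"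
      by (intro mult_left_mono mult_right_mono power_increasing) auto
    finally show "\<bar>r j\<bar> \<le> 2 * 3^m * norm (\<Sum>j<m. r j *\<^sub>R e j)" by (simp add: P_def)
  qed
qed

lemma fam_dep:
  fixes a :: "nat \<Rightarrow> 'a::real_vector"
  assumes "finite B" "card B < m" "\<forall>j<m. a j \<in> span B"
  shows "\<exists>r. (\<exists>j<m. r j \<noteq> 0) \<and> (\<Sum>j<m. r j *\<^sub>R a j) = 0"
proof (cases "inj_on a {..<m}")
  case True
  let ?A = "a ` {..<m}"
  have cA: "card ?A = m" using True card_image by fastforce
  have "dependent ?A"
  proof (rule ccontr)
    assume "independent ?A"
    then have "card ?A \<le> card B" using independent_span_bound[of B ?A] assms by auto
    then show False using cA assms by simp
  qed
  then obtain u where u: "\<exists>v\<in>?A. u v \<noteq> 0" "(\<Sum>v\<in>?A. u v *\<^sub>R v) = 0"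
    using dependent_finite[of ?A] by auto
  have "(\<Sum>j<m. u (a j) *\<^sub>R a j) = (\<Sum>v\<in>?A. u v *\<^sub>R v)"
    using sum.reindex[OF True, of "\<lambda>v. u v *\<^sub>R v"] by simp
  then show ?thesis using u by (intro exI[of _ "\<lambda>j. u (a j)"]) auto
next
  case False
  then obtain i j where ij: "i < m" "j < m" "i \<noteq> j" "a i = a j" unfolding inj_on_def by auto
  define r where "r k = (if k = i then 1 else if k = j then -1 else (0::real))" for k
  have "\<And>k. r k *\<^sub>R a k = (if k = i then a i else 0) - (if k = j then a j else 0)"
    using ij by (simp add: r_def)
  then have "(\<Sum>k<m. r k *\<^sub>R a k) = (\<Sum>k<m. (if k = i then a i else 0)) - (\<Sum>k<m. (if k = j then a j else 0))"
    by (simp add: sum_subtractf)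
  also have "\<dots> = 0" using ij by simp
  finally show ?thesis using ij by (intro exI[of _ r]) (auto simp: r_def)
qed



lemma final_arith:
  fixes x nb n1 d eps g c K h z :: real
  assumes x: "0 < x" and nb: "\<bar>nb - x\<bar> \<le> n1" "n1 \<le> eps * K * x" "eps * K \<le> 1/2" "0 \<le> nb"
    and d: "0 \<le> d" "d < eps" and c: "0 \<le> c" and K: "0 \<le> K" and g: "0 < g"
    and epsg: "eps * (25 + 20 * c * K) \<le> g"
    and bound: "z \<le> - g * nb^2 + (d * (x + nb) * (x + nb) + c * ((x + nb) * n1 + n1 * (x + nb)))"
  shows "z < 0"
proof -
  have "eps * K * x \<le> (1/2) * x" using nb(3) x by (intro mult_right_mono) auto
  then have n1x: "n1 \<le> x / 2" using nb(2) by linarith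
  have nbl: "x / 2 \<le> nb" and nbu: "nb \<le> 3 * x / 2" using nb(1) n1x abs_le_iff by linarith+
  have s: "x + nb \<le> 5 * x / 2" using nbu by simp
  have s0: "0 \<le> x + nb" using x nb by simp
  have n10: "0 \<le> n1" using nb by simp
  have "(x/2)^2 \<le> nb^2" using nbl x by (intro power_mono) auto
  then have t1: "- g * nb^2 \<le> - g * x^2 / 4" using g by (simp add: power_divide)
  have "d * (x + nb) * (x + nb) \<le> d * (5*x/2) * (5*x/2)"
    using s s0 d by (intro mult_mono) (auto intro: mult_left_mono)
  also have "\<dots> < eps * (5*x/2) * (5*x/2)" using d x by (intro mult_strict_right_mono) auto
  finally have t2: "d * (x + nb) * (x + nb) < eps * 25/4 * x^2" by (simp add: power2_eq_square)
  have "(x + nb) * n1 \<le> (5*x/2) * (eps * K * x)" using s s0 n10 nb by (intro mult_mono) auto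
  then have "c * ((x + nb) * n1 + n1 * (x + nb)) \<le> c * (2 * ((5*x/2) * (eps * K * x)))"
    using c by (intro mult_left_mono) (auto simp: algebra_simps)
  also have "\<dots> = eps * (5 * c * K) * x^2" by (simp add: power2_eq_square)
  finally have t3: "c * ((x + nb) * n1 + n1 * (x + nb)) \<le> eps * (5 * c * K) * x^2" .
  have "eps * (25/4 + 5 * c * K) = eps * (25 + 20 * c * K) / 4" by (simp add: algebra_simps)
  then have "eps * (25/4 + 5 * c * K) \<le> g / 4" using epsg by linarith
  then have t4: "eps * (25/4 + 5 * c * K) * x^2 \<le> g / 4 * x^2" using x by (intro mult_right_mono) auto
  have e1: "eps * (25/4 + 5 * c * K) * x^2 = eps * 25/4 * x^2 + eps * (5 * c * K) * x^2"
    by (simp add: algebra_simps)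
  have e2: "- g * x^2 / 4 = - (g / 4 * x^2)" by simp
  show ?thesis using bound t1 t2 t3 t4 e1 e2 by linarith
qed

lemma core:
  fixes Q :: "'a::real_normed_vector \<Rightarrow> 'a \<Rightarrow> complex" and B \<alpha> \<beta> V :: "'a set"
  assumes finB: "finite B" and \<alpha>B: "\<alpha> \<subseteq> span B"
    and \<beta>s: "subspace \<beta>" and Vdec: "V \<subseteq> {a + b | a b. a \<in> \<alpha> \<and> b \<in> \<beta>}" and \<beta>V: "\<beta> \<subseteq> V"
    and Vne: "V \<noteq> {}"
    and g: "0 < g" "\<forall>b\<in>\<beta>. h * Re (Q b b) \<le> - g * (norm b)^2"
    and h: "\<bar>h\<bar> = 1" and c: "0 \<le> c"
  shows "\<exists>\<epsilon>>0. \<forall>R W E d. subspace W \<and> (\<forall>u\<in>W. norm u = 1 \<longrightarrow> infdist u V < \<epsilon>) \<and>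
      0 \<le> d \<and> d < \<epsilon> \<and>
      (\<forall>x\<in>V. \<forall>y\<in>V. \<forall>u\<in>W. \<forall>v\<in>W.
        cmod (Q x y - R u v) \<le> d * (norm u + norm x) * (norm v + norm y)
          + c * ((norm u + norm x) * norm (v - y) + norm (u - x) * (norm v + norm y))) \<and>
      finite E \<and> independent E \<and> E \<subseteq> W \<and> card B < card E \<and> (\<forall>t\<in>span E. 0 \<le> h * Re (R t t))
      \<longrightarrow> False"
proof -
  define m where "m = Suc (card B)"
  define K :: real where "K = 2 * 3^m * real m"
  have K0: "0 < K" unfolding K_def m_def by simp
  define eps where "eps = min (1 / (2 * K)) (g / (25 + 20 * c * K))"
  have den: "0 < 25 + 20 * c * K" using c K0 by (smt (verit) mult_nonneg_nonneg)
  have eps0: "0 < eps" unfolding eps_def using K0 g den by simp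
  have epsK: "eps * K \<le> 1/2"
  proof -
    have "eps \<le> 1 / (2 * K)" unfolding eps_def by simp
    then have "eps * K \<le> 1 / (2 * K) * K" using K0 by (intro mult_right_mono) auto
    then show ?thesis using K0 by simp
  qed
  have epsg: "eps * (25 + 20 * c * K) \<le> g"
  proof -
    have "eps \<le> g / (25 + 20 * c * K)" unfolding eps_def by simp
    then show ?thesis using den by (simp add: pos_le_divide_eq)
  qed
  show ?thesis
  proof (intro exI[of _ eps] conjI eps0 allI impI)
    fix R W E d
    assume H: "subspace W \<and> (\<forall>u\<in>W. norm u = 1 \<longrightarrow> infdist u V < eps) \<and>
      0 \<le> d \<and> d < eps \<and>
      (\<forall>x\<in>V. \<forall>y\<in>V. \<forall>u\<in>W. \<forall>v\<in>W.
        cmod (Q x y - R u v) \<le> d * (norm u + norm x) * (norm v + norm y)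
          + c * ((norm u + norm x) * norm (v - y) + norm (u - x) * (norm v + norm y))) \<and>
      finite E \<and> independent E \<and> E \<subseteq> W \<and> card B < card E \<and> (\<forall>t\<in>span E. 0 \<le> h * Re (R t t))"
    then have Ws: "subspace W" and gapW: "\<forall>u\<in>W. norm u = 1 \<longrightarrow> infdist u V < eps"
      and d: "0 \<le> d" "d < eps"
      and dc: "\<forall>x\<in>V. \<forall>y\<in>V. \<forall>u\<in>W. \<forall>v\<in>W.
        cmod (Q x y - R u v) \<le> d * (norm u + norm x) * (norm v + norm y)
          + c * ((norm u + norm x) * norm (v - y) + norm (u - x) * (norm v + norm y))"
      and E: "finite E" "independent E" "E \<subseteq> W" "card B < card E"
      and pos: "\<forall>t\<in>span E. 0 \<le> h * Re (R t t)" by auto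
    have "m \<le> card E" using E unfolding m_def by simp
    then obtain e where e: "\<forall>j<m. e j \<in> span E \<and> norm (e j) = 1 \<and> (\<forall>y\<in>span (e ` {..<j}). 1/2 \<le> norm (e j - y))"
      using greedy[OF E(1) E(2)] by blast
    have spanW: "span E \<subseteq> W" using E(3) Ws span_minimal by blast
    have "\<forall>j. \<exists>v. j < m \<longrightarrow> v \<in> V \<and> norm (e j - v) < eps"
    proof
      fix j
      show "\<exists>v. j < m \<longrightarrow> v \<in> V \<and> norm (e j - v) < eps"
      proof (cases "j < m")
        case True
        then have "infdist (e j) V < eps" using gapW e spanW by blast
        then obtain v where "v \<in> V" "dist (e j) v < eps" using infdist_lessE[OF Vne] by blast
        then show ?thesis by (auto simp: dist_norm)
      qed auto
    qed
    then obtain v where v: "\<And>j. j < m \<Longrightarrow> v j \<in> V \<and> norm (e j - v j) < eps" by metis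
    have "\<forall>j. \<exists>ab. j < m \<longrightarrow> fst ab \<in> \<alpha> \<and> snd ab \<in> \<beta> \<and> v j = fst ab + snd ab"
    proof
      fix j
      show "\<exists>ab. j < m \<longrightarrow> fst ab \<in> \<alpha> \<and> snd ab \<in> \<beta> \<and> v j = fst ab + snd ab"
      proof (cases "j < m")
        case True
        then have "v j \<in> V" using v by blast
        then obtain a b where "a \<in> \<alpha>" "b \<in> \<beta>" "v j = a + b" using Vdec by blast
        then show ?thesis by (intro exI[of _ "(a, b)"]) auto
      qed auto
    qed
    then obtain ab where ab: "\<And>j. j < m \<Longrightarrow> fst (ab j) \<in> \<alpha> \<and> snd (ab j) \<in> \<beta> \<and> v j = fst (ab j) + snd (ab j)"
      by metis
    define a where "a j = fst (ab j)" for j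
    define b where "b j = snd (ab j)" for j
    have abj: "\<And>j. j < m \<Longrightarrow> a j \<in> \<alpha> \<and> b j \<in> \<beta> \<and> v j = a j + b j" using ab a_def b_def by auto
    have "card B < m" unfolding m_def by simp
    moreover have "\<forall>j<m. a j \<in> span B" using abj \<alpha>B by blast
    ultimately obtain r where r: "\<exists>j<m. r j \<noteq> 0" "(\<Sum>j<m. r j *\<^sub>R a j) = 0"
      using fam_dep[OF finB] by blast
    define t where "t = (\<Sum>j<m. r j *\<^sub>R e j)"
    define bb where "bb = (\<Sum>j<m. r j *\<^sub>R b j)"
    have cond: "\<forall>j<m. \<bar>r j\<bar> \<le> 2 * 3^m * norm t"
      unfolding t_def using conditioning[of m e r] e by blast
    have tE: "t \<in> span E" unfolding t_def using e by (intro span_sum span_scale) auto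
    have tW: "t \<in> W" using tE spanW by blast
    have bbb: "bb \<in> \<beta>" unfolding bb_def using abj \<beta>s
      by (intro subspace_sum) (auto intro: subspace_scale)
    have bbV: "bb \<in> V" using bbb \<beta>V by blast
    have t0: "t \<noteq> 0"
    proof
      assume "t = 0"
      then have "\<forall>j<m. r j = 0" using cond by auto
      then show False using r by blast
    qed
    have tb: "t - bb = (\<Sum>j<m. r j *\<^sub>R (e j - v j))"
    proof -
      have "(\<Sum>j<m. r j *\<^sub>R (e j - v j)) = (\<Sum>j<m. r j *\<^sub>R e j - r j *\<^sub>R b j - r j *\<^sub>R a j)"
        using abj by (intro sum.cong) (auto simp: algebra_simps)
      also have "\<dots> = t - bb - (\<Sum>j<m. r j *\<^sub>R a j)"
        unfolding t_def bb_def by (simp add: sum_subtractf)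
      finally show ?thesis using r by simp
    qed
    have ntb: "norm (t - bb) \<le> eps * K * norm t"
    proof -
      have "norm (t - bb) \<le> (\<Sum>j<m. norm (r j *\<^sub>R (e j - v j)))" unfolding tb by (rule norm_sum)
      also have "\<dots> \<le> (\<Sum>j<m. (2 * 3^m * norm t) * eps)"
      proof (intro sum_mono)
        fix j assume "j \<in> {..<m}"
        then have j: "j < m" by simp
        have "norm (r j *\<^sub>R (e j - v j)) = \<bar>r j\<bar> * norm (e j - v j)" by simp
        also have "\<dots> \<le> (2 * 3^m * norm t) * eps"
          using cond j v[OF j] by (intro mult_mono) auto
        finally show "norm (r j *\<^sub>R (e j - v j)) \<le> (2 * 3^m * norm t) * eps" .
      qed
      also have "\<dots> = eps * K * norm t" by (simp add: K_def)
      finally show ?thesis .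
    qed
    have nb1: "\<bar>norm bb - norm t\<bar> \<le> norm (t - bb)"
      by (metis norm_minus_commute norm_triangle_ineq3)
    have dct: "cmod (Q bb bb - R t t) \<le> d * (norm t + norm bb) * (norm t + norm bb)
          + c * ((norm t + norm bb) * norm (t - bb) + norm (t - bb) * (norm t + norm bb))"
      using dc bbV tW by blast
    have q1: "h * Re (R t t) = h * Re (Q bb bb) - h * Re (Q bb bb - R t t)" by (simp add: algebra_simps)
    have q2: "h * Re (Q bb bb) \<le> - g * (norm bb)^2" using g bbb by blast
    have q3: "- (h * Re (Q bb bb - R t t)) \<le> cmod (Q bb bb - R t t)"
    proof -
      have "\<bar>h * Re (Q bb bb - R t t)\<bar> = \<bar>Re (Q bb bb - R t t)\<bar>" using h by (simp add: abs_mult)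
      also have "\<dots> \<le> cmod (Q bb bb - R t t)" by (rule abs_Re_le_cmod)
      finally show ?thesis by linarith
    qed
    have "h * Re (R t t) \<le> - g * (norm bb)^2 + cmod (Q bb bb - R t t)" using q1 q2 q3 by linarith
    then have "h * Re (R t t) \<le> - g * (norm bb)^2 + (d * (norm t + norm bb) * (norm t + norm bb)
          + c * ((norm t + norm bb) * norm (t - bb) + norm (t - bb) * (norm t + norm bb)))"
      using dct by linarith
    then have "h * Re (R t t) < 0"
      using final_arith[of "norm t" "norm bb" "norm (t - bb)" eps K d c g "h * Re (R t t)"]
        t0 nb1 ntb epsK d c K0 g epsg by auto
    then show False using pos tE by force
  qed
qed



interpretation cv: vector_space "scaleC :: complex \<Rightarrow> 'a::cvector \<Rightarrow> 'a"
  by unfold_locales (auto simp: scaleC_add_right scaleC_add_left scaleC_scaleC scaleC_one)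

lemma csubspace_cv: "csubspace S \<longleftrightarrow> cv.subspace S"
  unfolding csubspace_def cv.subspace_def by auto

lemma csubspace_real: "csubspace S \<Longrightarrow> subspace S"
  unfolding csubspace_def subspace_def by (auto simp: scaleR_scaleC)

lemma cindep0_iff: "finite F \<Longrightarrow> cindep_mod {0} F \<longleftrightarrow> \<not> cv.dependent F"
  unfolding cindep_mod_def using cv.dependent_finite[of F] by auto

lemma Sup_add_le_enat:
  fixes X Y :: "enat set"
  assumes "X \<noteq> {}" "Y \<noteq> {}" "\<forall>x\<in>X. \<forall>y\<in>Y. x + y \<le> enat n"
  shows "Sup X + Sup Y \<le> enat n"
proof -
  obtain y0 where y0: "y0 \<in> Y" using assms by blast
  obtain x0 where x0: "x0 \<in> X" using assms by blast
  have "\<forall>x\<in>X. x \<le> enat n"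
  proof
    fix x assume x: "x \<in> X"
    have "x \<le> x + y0" unfolding le_iff_add by blast
    also have "\<dots> \<le> enat n" using assms(3) x y0 by blast
    finally show "x \<le> enat n" .
  qed
  then have fX: "finite X" using finite_enat_bounded by blast
  have "\<forall>y\<in>Y. y \<le> enat n"
  proof
    fix y assume y: "y \<in> Y"
    have "y \<le> x0 + y" unfolding le_iff_add by (metis add.commute)
    also have "\<dots> \<le> enat n" using assms(3) x0 y by blast
    finally show "y \<le> enat n" .
  qed
  then have fY: "finite Y" using finite_enat_bounded by blast
  have "Sup X \<in> X" using fX assms(1) by (simp add: Sup_enat_def)
  moreover have "Sup Y \<in> Y" using fY assms(2) by (simp add: Sup_enat_def)
  ultimately show ?thesis using assms by blast
qed

lemma scaleC_real_decomp:
  fixes v :: "'a::cvector"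
  shows "scaleC u v = Re u *\<^sub>R v + Im u *\<^sub>R scaleC \<i> v"
proof -
  have "u = complex_of_real (Re u) + complex_of_real (Im u) * \<i>" by (simp add: complex_eq_iff)
  then have "scaleC u v = scaleC (complex_of_real (Re u)) v + scaleC (complex_of_real (Im u) * \<i>) v"
    by (metis scaleC_add_left)
  also have "\<dots> = Re u *\<^sub>R v + Im u *\<^sub>R scaleC \<i> v"
    by (simp add: scaleR_scaleC scaleC_scaleC)
  finally show ?thesis .
qed

lemma cspan_real:
  fixes F :: "'a::cvector set"
  assumes "finite F"
  shows "cv.span F \<subseteq> span (F \<union> scaleC \<i> ` F)"
proof
  fix x assume "x \<in> cv.span F"
  then obtain u where x: "x = (\<Sum>v\<in>F. scaleC (u v) v)" using cv.span_finite[OF assms] by auto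
  show "x \<in> span (F \<union> scaleC \<i> ` F)"
    unfolding x
  proof (intro span_sum)
    fix v assume v: "v \<in> F"
    show "scaleC (u v) v \<in> span (F \<union> scaleC \<i> ` F)"
      unfolding scaleC_real_decomp[of "u v" v]
      using v by (intro span_add span_scale span_base) auto
  qed
qed

lemma cdim_finite_basis:
  fixes A :: "'a::cvector set"
  assumes "cdim A = enat n"
  shows "\<exists>F. finite F \<and> F \<subseteq> A \<and> card F \<le> n \<and> A \<subseteq> cv.span F"
proof -
  define Z where "Z = {enat (card F) | F. finite F \<and> F \<subseteq> A \<and> cindep_mod {0} F}"
  have SZ: "Sup Z = enat n" using assms unfolding Z_def cdim_def cdim_quot_def by simp
  have Zb: "\<forall>z\<in>Z. z \<le> enat n" using SZ Sup_upper by metis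
  have fZ: "finite Z" using Zb finite_enat_bounded by blast
  have "enat (card ({}::'a set)) \<in> Z" unfolding Z_def cindep_mod_def by (intro CollectI exI[of _ "{}"]) auto
  then have Zne: "Z \<noteq> {}" by blast
  have "Sup Z \<in> Z" using fZ Zne by (simp add: Sup_enat_def)
  then have "enat n \<in> Z" using SZ by simp
  then obtain F where F: "finite F" "F \<subseteq> A" "cindep_mod {0} F" "enat (card F) = enat n"
    unfolding Z_def by blast
  have "A \<subseteq> cv.span F"
  proof
    fix x assume x: "x \<in> A"
    show "x \<in> cv.span F"
    proof (rule ccontr)
      assume nx: "x \<notin> cv.span F"
      then have xF: "x \<notin> F" using cv.span_base by blast
      have "\<not> cv.dependent F" using cindep0_iff F by blast
      then have "\<not> cv.dependent (insert x F)" using cv.independent_insert[of x F] nx xF by simp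
      then have "cindep_mod {0} (insert x F)" using cindep0_iff F(1) by blast
      then have "enat (card (insert x F)) \<in> Z" unfolding Z_def using F x by auto
      then have "enat (Suc n) \<le> enat n" using Zb F xF by auto
      then show False by simp
    qed
  qed
  then show ?thesis using F by auto
qed

lemma indep_realify:
  fixes H :: "'a::cvector set"
  assumes fin: "finite H" and ind: "\<not> cv.dependent H"
  shows "independent (H \<union> scaleC \<i> ` H) \<and> card (H \<union> scaleC \<i> ` H) = 2 * card H"
proof -
  have injI: "inj (scaleC \<i> :: 'a \<Rightarrow> 'a)"
  proof (rule injI)
    fix x y :: 'a assume "scaleC \<i> x = scaleC \<i> y"
    then have "scaleC (- \<i>) (scaleC \<i> x) = scaleC (- \<i>) (scaleC \<i> y)" by simp
    then show "x = y" by (simp add: scaleC_scaleC scaleC_one)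
  qed
  have n0: "0 \<notin> H" using ind cv.dependent_zero by blast
  have disj: "H \<inter> scaleC \<i> ` H = {}"
  proof (rule ccontr)
    assume "H \<inter> scaleC \<i> ` H \<noteq> {}"
    then obtain x y where xy: "x \<in> H" "y \<in> H" "x = scaleC \<i> y" by blast
    show False
    proof (cases "x = y")
      case True
      then have "scaleC (1 - \<i>) y = 0" using xy
        by (metis cv.scale_left_diff_distrib diff_self scaleC_one)
      then have "y = 0" by (simp add: cv.scale_eq_0_iff)
      then show False using n0 xy by blast
    next
      case False
      have "y \<in> H - {x}" using xy False by blast
      then have "x \<in> cv.span (H - {x})" unfolding xy(3) by (intro cv.span_scale cv.span_base)
      then show False using ind xy cv.dependent_def by blast
    qed
  qed
  have card: "card (H \<union> scaleC \<i> ` H) = 2 * card H"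
    using card_Un_disjoint[OF fin finite_imageI[OF fin] disj] card_image[OF inj_on_subset[OF injI, of H]]
    by simp
  have "independent (H \<union> scaleC \<i> ` H)"
  proof (rule ccontr)
    assume "\<not> independent (H \<union> scaleC \<i> ` H)"
    then obtain u where u: "\<exists>v \<in> H \<union> scaleC \<i> ` H. u v \<noteq> 0" "(\<Sum>v\<in>H \<union> scaleC \<i> ` H. u v *\<^sub>R v) = 0"
      using dependent_finite[of "H \<union> scaleC \<i> ` H"] fin by auto
    have "(\<Sum>v\<in>H \<union> scaleC \<i> ` H. u v *\<^sub>R v) = (\<Sum>v\<in>H. u v *\<^sub>R v) + (\<Sum>v\<in>scaleC \<i> ` H. u v *\<^sub>R v)"
      using sum.union_disjoint[OF fin finite_imageI[OF fin] disj] by simp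
    also have "(\<Sum>v\<in>scaleC \<i> ` H. u v *\<^sub>R v) = (\<Sum>v\<in>H. u (scaleC \<i> v) *\<^sub>R scaleC \<i> v)"
      using sum.reindex[OF inj_on_subset[OF injI, of H], of "\<lambda>v. u v *\<^sub>R v"] by simp
    also have "(\<Sum>v\<in>H. u v *\<^sub>R v) + (\<Sum>v\<in>H. u (scaleC \<i> v) *\<^sub>R scaleC \<i> v)
        = (\<Sum>v\<in>H. scaleC (Complex (u v) (u (scaleC \<i> v))) v)"
    proof -
      have "(\<Sum>v\<in>H. scaleC (Complex (u v) (u (scaleC \<i> v))) v)
          = (\<Sum>v\<in>H. u v *\<^sub>R v + u (scaleC \<i> v) *\<^sub>R scaleC \<i> v)"
        by (intro sum.cong refl) (subst scaleC_real_decomp, simp)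
      then show ?thesis by (simp only: sum.distrib)
    qed
    finally have eq: "(\<Sum>v\<in>H \<union> scaleC \<i> ` H. u v *\<^sub>R v) = (\<Sum>v\<in>H. scaleC (Complex (u v) (u (scaleC \<i> v))) v)" .
    define cc where "cc v = Complex (u v) (u (scaleC \<i> v))" for v
    have s0: "(\<Sum>v\<in>H. scaleC (cc v) v) = 0" unfolding cc_def using eq u(2) by metis
    have "\<forall>v\<in>H. cc v = 0"
    proof (rule ccontr)
      assume "\<not> (\<forall>v\<in>H. cc v = 0)"
      then have "cv.dependent H" unfolding cv.dependent_finite[OF fin] using s0 by blast
      then show False using ind by blast
    qed
    then have "\<forall>v\<in>H. Complex (u v) (u (scaleC \<i> v)) = 0" unfolding cc_def .
    then have "\<forall>v\<in>H. u v = 0 \<and> u (scaleC \<i> v) = 0" by (simp add: complex_eq_iff)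
    then show False using u(1) by auto
  qed
  then show ?thesis using card by blast
qed




context
  fixes R :: "'a::cbanach \<Rightarrow> 'a \<Rightarrow> complex" and W :: "'a set"
  assumes bsp: "bounded_symmetric_pair R W"
begin

lemma bsp_W: "csubspace W"
  using bsp unfolding bounded_symmetric_pair_def closed_csubspace_def by blast

lemma bsp_add: "x \<in> W \<Longrightarrow> y \<in> W \<Longrightarrow> z \<in> W \<Longrightarrow> R (x + y) z = R x z + R y z"
  using bsp unfolding bounded_symmetric_pair_def by blast

lemma bsp_scale: "x \<in> W \<Longrightarrow> y \<in> W \<Longrightarrow> R (scaleC a x) y = a * R x y"
  using bsp unfolding bounded_symmetric_pair_def by blast

lemma bsp_sym: "x \<in> W \<Longrightarrow> y \<in> W \<Longrightarrow> R x y = cnj (R y x)"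
  using bsp unfolding bounded_symmetric_pair_def by blast

lemma bsp_zero: "y \<in> W \<Longrightarrow> R 0 y = 0"
proof -
  assume y: "y \<in> W"
  have W0: "0 \<in> W" using bsp_W unfolding csubspace_def by auto
  have "R (scaleC 0 0) y = 0 * R 0 y" using bsp_scale[OF W0 y] .
  then show ?thesis by simp
qed

lemma rad_sub: "radical R W \<subseteq> W"
  unfolding radical_def Qorth_def by auto

lemma rad_csub: "csubspace (radical R W)"
proof -
  have Wc: "csubspace W" by (rule bsp_W)
  show ?thesis unfolding csubspace_def radical_def Qorth_def
  proof (intro conjI ballI allI)
    show "0 \<in> {u \<in> W. \<forall>v\<in>W. R u v = 0}" using Wc bsp_zero unfolding csubspace_def by auto
  next
    fix x y assume x: "x \<in> {u \<in> W. \<forall>v\<in>W. R u v = 0}" and y: "y \<in> {u \<in> W. \<forall>v\<in>W. R u v = 0}"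
    then show "x + y \<in> {u \<in> W. \<forall>v\<in>W. R u v = 0}"
      using Wc bsp_add unfolding csubspace_def by auto
  next
    fix a x assume x: "x \<in> {u \<in> W. \<forall>v\<in>W. R u v = 0}"
    then show "scaleC a x \<in> {u \<in> W. \<forall>v\<in>W. R u v = 0}"
      using Wc bsp_scale unfolding csubspace_def by auto
  qed
qed

lemma quad_rad:
  assumes s: "s \<in> W" and r: "r \<in> radical R W"
  shows "Re (R (s + r) (s + r)) = Re (R s s)"
proof -
  have rW: "r \<in> W" using r rad_sub by blast
  have sr: "s + r \<in> W" using s rW bsp_W unfolding csubspace_def by auto
  have r0: "\<And>v. v \<in> W \<Longrightarrow> R r v = 0" using r unfolding radical_def Qorth_def by auto
  have "R (s + r) (s + r) = R s (s + r) + R r (s + r)" using bsp_add[OF s rW sr] .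
  also have "R r (s + r) = 0" using r0 sr by blast
  also have "R s (s + r) = cnj (R (s + r) s)" using bsp_sym[OF s sr] .
  also have "R (s + r) s = R s s + R r s" using bsp_add[OF s rW s] .
  also have "R r s = 0" using r0 s by blast
  finally have "R (s + r) (s + r) = cnj (R s s + 0) + 0" .
  then show ?thesis by simp
qed

end



lemma bsp_bound:
  assumes "bounded_symmetric_pair R W"
  shows "\<exists>C\<ge>0. \<forall>x\<in>W. \<forall>y\<in>W. cmod (R x y) \<le> C * norm x * norm y"
proof -
  obtain C where C: "\<forall>x\<in>W. \<forall>y\<in>W. cmod (R x y) \<le> C * norm x * norm y"
    using assms unfolding bounded_symmetric_pair_def by blast
  have "\<forall>x\<in>W. \<forall>y\<in>W. cmod (R x y) \<le> max C 0 * norm x * norm y"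
  proof (intro ballI)
    fix x y assume "x \<in> W" "y \<in> W"
    then have "cmod (R x y) \<le> C * norm x * norm y" using C by blast
    also have "\<dots> \<le> max C 0 * norm x * norm y"
      by (intro mult_right_mono) auto
    finally show "cmod (R x y) \<le> max C 0 * norm x * norm y" .
  qed
  then show ?thesis by (intro exI[of _ "max C 0"]) auto
qed

lemma delta_ne:
  assumes Q: "bounded_symmetric_pair Q V" and R: "bounded_symmetric_pair R W" and c: "0 \<le> c"
  shows "{d. d \<ge> 0 \<and>
     (\<forall>x\<in>V. \<forall>y\<in>V. \<forall>u\<in>W. \<forall>v\<in>W.
        cmod (Q x y - R u v) \<le> d * (norm u + norm x) * (norm v + norm y)
          + c * ((norm u + norm x) * norm (v - y) + norm (u - x) * (norm v + norm y)))} \<noteq> {}"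
proof -
  obtain C1 where C1: "C1 \<ge> 0" "\<forall>x\<in>V. \<forall>y\<in>V. cmod (Q x y) \<le> C1 * norm x * norm y"
    using bsp_bound[OF Q] by blast
  obtain C2 where C2: "C2 \<ge> 0" "\<forall>x\<in>W. \<forall>y\<in>W. cmod (R x y) \<le> C2 * norm x * norm y"
    using bsp_bound[OF R] by blast
  define M where "M = C1 + C2"
  have "\<forall>x\<in>V. \<forall>y\<in>V. \<forall>u\<in>W. \<forall>v\<in>W.
        cmod (Q x y - R u v) \<le> M * (norm u + norm x) * (norm v + norm y)
          + c * ((norm u + norm x) * norm (v - y) + norm (u - x) * (norm v + norm y))"
  proof (intro ballI)
    fix x y u v assume xy: "x \<in> V" "y \<in> V" and uv: "u \<in> W" "v \<in> W"
    have "cmod (Q x y - R u v) \<le> cmod (Q x y) + cmod (R u v)" by (rule norm_triangle_ineq4)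
    also have "\<dots> \<le> C1 * norm x * norm y + C2 * norm u * norm v" using C1 C2 xy uv by (intro add_mono) auto
    also have "C1 * norm x * norm y \<le> M * norm x * norm y"
      unfolding M_def using C2 by (intro mult_right_mono) auto
    also have "C2 * norm u * norm v \<le> M * norm u * norm v"
      unfolding M_def using C1 by (intro mult_right_mono) auto
    also have "M * norm x * norm y + M * norm u * norm v \<le> M * (norm u + norm x) * (norm v + norm y)"
    proof -
      have "M * (norm u + norm x) * (norm v + norm y) = M * norm x * norm y + M * norm u * norm v
          + M * (norm u * norm y + norm x * norm v)" by (simp add: algebra_simps)
      moreover have "0 \<le> M * (norm u * norm y + norm x * norm v)" unfolding M_def using C1 C2 by simp
      ultimately show ?thesis by linarith
    qed
    also have "\<dots> \<le> M * (norm u + norm x) * (norm v + norm y)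
          + c * ((norm u + norm x) * norm (v - y) + norm (u - x) * (norm v + norm y))"
      using c by simp
    finally show "cmod (Q x y - R u v) \<le> M * (norm u + norm x) * (norm v + norm y)
          + c * ((norm u + norm x) * norm (v - y) + norm (u - x) * (norm v + norm y))" by simp
  qed
  moreover have "M \<ge> 0" unfolding M_def using C1 C2 by simp
  ultimately show ?thesis by blast
qed



lemma key_count:
  fixes R :: "'a::cbanach \<Rightarrow> 'a \<Rightarrow> complex"
  assumes bsp: "bounded_symmetric_pair R W"
    and W0: "closed_csubspace W0" "W0 \<subseteq> radical R W"
    and S: "csubspace S" "S \<subseteq> W" "\<forall>x\<in>S - {0}. h * Re (R x x) > 0"
    and FS: "finite FS" "FS \<subseteq> S" "cindep_mod {0} FS"
    and G: "finite G" "G \<subseteq> radical R W" "cindep_mod W0 G"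
  shows "\<exists>E. finite E \<and> independent E \<and> E \<subseteq> W \<and> card E = 2 * (card FS + card G)
      \<and> (\<forall>t\<in>span E. 0 \<le> h * Re (R t t))"
proof -
  let ?rad = "radical R W"
  have Wc: "csubspace W" using bsp_W[OF bsp] .
  have radc: "csubspace ?rad" using rad_csub[OF bsp] .
  have radW: "?rad \<subseteq> W" using rad_sub[OF bsp] .
  have R00: "R 0 0 = 0" using bsp_zero[OF bsp] Wc unfolding csubspace_def by blast
  have Rrad: "\<And>r v. r \<in> ?rad \<Longrightarrow> v \<in> W \<Longrightarrow> R r v = 0" unfolding radical_def Qorth_def by blast
  have Sint: "\<And>z. z \<in> S \<Longrightarrow> z \<in> ?rad \<Longrightarrow> z = 0"
  proof (rule ccontr)
    fix z assume z: "z \<in> S" "z \<in> ?rad" "z \<noteq> 0"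
    have "R z z = 0" using Rrad z S(2) by blast
    moreover have "z \<in> S - {0}" using z by blast
    then have "0 < h * Re (R z z)" using S(3) by blast
    ultimately show False by simp
  qed
  have indFS: "\<not> cv.dependent FS" using cindep0_iff FS by blast
  have "0 \<notin> FS" using indFS cv.dependent_zero by blast
  then have disj: "FS \<inter> G = {}" using Sint FS(2) G(2) by blast
  define H where "H = FS \<union> G"
  have finH: "finite H" unfolding H_def using FS G by simp
  have cardH: "card H = card FS + card G" unfolding H_def using card_Un_disjoint[OF FS(1) G(1) disj] .
  have S_cv: "cv.subspace S" using S(1) csubspace_cv by blast
  have rad_cv: "cv.subspace ?rad" using radc csubspace_cv by blast
  have indH: "\<not> cv.dependent H"
  proof
    assume "cv.dependent H"
    then obtain u where u: "\<exists>v\<in>H. u v \<noteq> 0" "(\<Sum>v\<in>H. scaleC (u v) v) = 0"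
      using cv.dependent_finite[OF finH] by blast
    define s where "s = (\<Sum>v\<in>FS. scaleC (u v) v)"
    define r where "r = (\<Sum>v\<in>G. scaleC (u v) v)"
    have sr: "s + r = 0" using u(2) unfolding H_def s_def r_def
      using sum.union_disjoint[OF FS(1) G(1) disj, of "\<lambda>v. scaleC (u v) v"] by simp
    have sS: "s \<in> S" unfolding s_def using FS(2)
      by (intro cv.subspace_sum[OF S_cv] cv.subspace_scale[OF S_cv]) auto
    have rR: "r \<in> ?rad" unfolding r_def using G(2)
      by (intro cv.subspace_sum[OF rad_cv] cv.subspace_scale[OF rad_cv]) auto
    have "s = - r" using sr by (simp add: eq_neg_iff_add_eq_0)
    then have "s \<in> ?rad" using rR cv.subspace_neg[OF rad_cv] by simp
    then have s0: "s = 0" using Sint sS by blast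
    then have r0: "r = 0" using sr by simp
    have "\<forall>x\<in>FS. u x = 0" using FS(3) s0 unfolding cindep_mod_def s_def by blast
    moreover have "0 \<in> W0" using W0(1) unfolding closed_csubspace_def csubspace_def by blast
    then have "\<forall>x\<in>G. u x = 0" using G(3) r0 unfolding cindep_mod_def r_def by auto
    ultimately show False using u(1) unfolding H_def by blast
  qed
  define E where "E = H \<union> scaleC \<i> ` H"
  have EE: "independent E \<and> card E = 2 * card H" unfolding E_def using indep_realify[OF finH indH] .
  have HW: "H \<subseteq> W" unfolding H_def using FS(2) S(2) G(2) radW by blast
  have EW: "E \<subseteq> W" unfolding E_def using HW Wc unfolding csubspace_def by blast
  define Z where "Z = {s + r | s r. s \<in> S \<and> r \<in> ?rad}"
  have Zs: "subspace Z" unfolding Z_def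
    using subspace_sums[OF csubspace_real[OF S(1)] csubspace_real[OF radc]] .
  have S0: "0 \<in> S" using S(1) unfolding csubspace_def by blast
  have R0: "0 \<in> ?rad" using radc unfolding csubspace_def by blast
  have SZ: "S \<subseteq> Z" unfolding Z_def using R0 by force
  have RZ: "?rad \<subseteq> Z" unfolding Z_def using S0 by force
  have "H \<subseteq> Z" unfolding H_def using FS(2) G(2) SZ RZ by blast
  moreover have "scaleC \<i> ` H \<subseteq> Z"
  proof
    fix z assume "z \<in> scaleC \<i> ` H"
    then obtain w where w: "w \<in> H" "z = scaleC \<i> w" by blast
    show "z \<in> Z"
    proof (cases "w \<in> FS")
      case True
      then have "z \<in> S" using w FS(2) S(1) unfolding csubspace_def by blast
      then show ?thesis using SZ by blast
    next
      case False
      then have "w \<in> G" using w unfolding H_def by blast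
      then have "z \<in> ?rad" using w G(2) radc unfolding csubspace_def by blast
      then show ?thesis using RZ by blast
    qed
  qed
  ultimately have "E \<subseteq> Z" unfolding E_def by blast
  then have spanZ: "span E \<subseteq> Z" using span_minimal Zs by blast
  have pos: "\<forall>t\<in>span E. 0 \<le> h * Re (R t t)"
  proof
    fix t assume "t \<in> span E"
    then have "t \<in> Z" using spanZ by blast
    then obtain s r where t: "t = s + r" "s \<in> S" "r \<in> ?rad" unfolding Z_def by blast
    have "Re (R t t) = Re (R s s)" unfolding t(1) using quad_rad[OF bsp _ t(3)] t(2) S(2) by blast
    moreover have "0 \<le> h * Re (R s s)"
    proof (cases "s = 0")
      case True then show ?thesis using R00 by simp
    next
      case False then show ?thesis using S(3) t(2) by (auto intro: less_imp_le)
    qed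
    ultimately show "0 \<le> h * Re (R t t)" by simp
  qed
  show ?thesis using EE cardH EW pos finH unfolding E_def by (intro exI[of _ E]) (auto simp: E_def)
qed



lemma sup_part:
  fixes R :: "'a::cbanach \<Rightarrow> 'a \<Rightarrow> complex"
  assumes Wc: "csubspace W"
    and cnt: "\<And>S FS G. csubspace S \<Longrightarrow> S \<subseteq> W \<Longrightarrow> \<forall>x\<in>S - {0}. h * Re (R x x) > 0 \<Longrightarrow>
          finite FS \<Longrightarrow> FS \<subseteq> S \<Longrightarrow> cindep_mod {0} FS \<Longrightarrow>
          finite G \<Longrightarrow> G \<subseteq> radical R W \<Longrightarrow> cindep_mod W0 G \<Longrightarrow> card FS + card G \<le> n"
  shows "m_plus h R W + cdim_quot (radical R W) W0 \<le> enat n"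
  unfolding m_plus_def cdim_quot_def[of "radical R W"]
proof (rule Sup_add_le_enat)
  have c0: "csubspace {0::'a}" unfolding csubspace_def by simp
  have w0: "{0} \<subseteq> W" using Wc unfolding csubspace_def by simp
  have "cdim {0::'a} \<in> {cdim S |S. csubspace S \<and> S \<subseteq> W \<and> (\<forall>x\<in>S - {0}. 0 < h * Re (R x x))}"
    using c0 w0 by (intro CollectI exI[of _ "{0}"]) simp
  then show "{cdim S |S. csubspace S \<and> S \<subseteq> W \<and> (\<forall>x\<in>S - {0}. 0 < h * Re (R x x))} \<noteq> {}"
    by (metis empty_iff)
  have "enat (card ({}::'a set)) \<in> {enat (card F) |F. finite F \<and> F \<subseteq> radical R W \<and> cindep_mod W0 F}"
    by (intro CollectI exI[of _ "{}"]) (simp add: cindep_mod_def)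
  then show "{enat (card F) |F. finite F \<and> F \<subseteq> radical R W \<and> cindep_mod W0 F} \<noteq> {}"
    by (metis empty_iff)
  show "\<forall>x\<in>{cdim S |S. csubspace S \<and> S \<subseteq> W \<and> (\<forall>x\<in>S - {0}. 0 < h * Re (R x x))}.
     \<forall>y\<in>{enat (card F) |F. finite F \<and> F \<subseteq> radical R W \<and> cindep_mod W0 F}. x + y \<le> enat n"
  proof (intro ballI)
    fix x y
    assume xm: "x \<in> {cdim S |S. csubspace S \<and> S \<subseteq> W \<and> (\<forall>x\<in>S - {0}. 0 < h * Re (R x x))}"
       and ym: "y \<in> {enat (card F) |F. finite F \<and> F \<subseteq> radical R W \<and> cindep_mod W0 F}"
    from xm obtain S where S: "x = cdim S" "csubspace S" "S \<subseteq> W" "\<forall>x\<in>S - {0}. 0 < h * Re (R x x)"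
      unfolding mem_Collect_eq by (elim exE conjE) simp
    from ym obtain G where G: "y = enat (card G)" "finite G" "G \<subseteq> radical R W" "cindep_mod W0 G"
      unfolding mem_Collect_eq by (elim exE conjE) simp
    have "Sup {enat (card F) |F. finite F \<and> F \<subseteq> S \<and> cindep_mod {0} F} + Sup {y} \<le> enat n"
    proof (rule Sup_add_le_enat)
      have "enat (card ({}::'a set)) \<in> {enat (card F) |F. finite F \<and> F \<subseteq> S \<and> cindep_mod {0} F}"
        by (intro CollectI exI[of _ "{}"]) (simp add: cindep_mod_def)
      then show "{enat (card F) |F. finite F \<and> F \<subseteq> S \<and> cindep_mod {0} F} \<noteq> {}"
        by (metis empty_iff)
      show "{y} \<noteq> {}" by simp
      show "\<forall>x\<in>{enat (card F) |F. finite F \<and> F \<subseteq> S \<and> cindep_mod {0} F}. \<forall>y'\<in>{y}. x + y' \<le> enat n"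
      proof (intro ballI)
        fix x' y' assume xm': "x' \<in> {enat (card F) |F. finite F \<and> F \<subseteq> S \<and> cindep_mod {0} F}" and ym': "y' \<in> {y}"
        from xm' obtain FS where FS: "x' = enat (card FS)" "finite FS" "FS \<subseteq> S" "cindep_mod {0} FS"
          unfolding mem_Collect_eq by (elim exE conjE) simp
        have "card FS + card G \<le> n" using cnt[OF S(2-4) FS(2-4) G(2-4)] .
        then show "x' + y' \<le> enat n" using FS(1) G(1) ym' by simp
      qed
    qed
    then show "x + y \<le> enat n" using S(1) unfolding cdim_def cdim_quot_def by simp
  qed
qed

theorem theorem1p7:
  fixes Q :: "'a::cbanach \<Rightarrow> 'a \<Rightarrow> complex"
    and V V0 \<alpha> \<beta> :: "'a set"
    and h c :: real
  assumes QV: "bounded_symmetric_pair Q V"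
    and V0: "closed_csubspace V0" "V0 \<subseteq> radical Q V"
    and h: "h \<in> {1, -1}"
    and c: "c \<ge> 0"
    and \<alpha>: "closed_csubspace \<alpha>" "\<alpha> \<subseteq> V" "\<forall>x\<in>\<alpha>. h * Re (Q x x) \<ge> 0"
    and \<beta>: "closed_csubspace \<beta>" "\<beta> \<subseteq> V" "\<forall>x\<in>\<beta> - {0}. h * Re (Q x x) < 0"
    and V0_eq: "V0 = radical Q \<beta>"
    and gamma_pos: "gamma Q \<beta> > 0"
    and dsum: "V = {a + b | a b. a \<in> \<alpha> \<and> b \<in> \<beta>}" "\<alpha> \<inter> \<beta> = {0}"
    and orth: "\<forall>a\<in>\<alpha>. \<forall>b\<in>\<beta>. Q a b = 0"
  shows "\<exists>\<epsilon>>0. \<forall>R W W0.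
           bounded_symmetric_pair R W \<and> closed_csubspace W0 \<and> W0 \<subseteq> radical R W \<and>
           gap_hat V W < \<epsilon> \<and> gap V0 W0 < \<epsilon> \<and> delta_c c Q V R W < \<epsilon>
           \<longrightarrow> m_plus h R W + cdim_quot (radical R W) W0 \<le> cdim \<alpha>"
proof -
  have hh: "\<bar>h\<bar> = 1" using h by auto
  have Vc: "csubspace V" using bsp_W[OF QV] .
  have \<beta>c: "csubspace \<beta>" using \<beta>(1) unfolding closed_csubspace_def by blast
  have \<beta>0: "0 \<in> \<beta>" using \<beta>c unfolding csubspace_def by blast
  have Q00: "Q 0 0 = 0" using bsp_zero[OF QV] \<beta>0 \<beta>(2) by blast
  have radb: "radical Q \<beta> = {0}"
  proof
    show "radical Q \<beta> \<subseteq> {0}"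
    proof
      fix u assume u: "u \<in> radical Q \<beta>"
      then have "u \<in> \<beta>" "Q u u = 0" unfolding radical_def Qorth_def by auto
      then show "u \<in> {0}" using \<beta>(3) by force
    qed
  next
    have "\<forall>v\<in>\<beta>. Q 0 v = 0" using bsp_zero[OF QV] \<beta>(2) by blast
    then show "{0} \<subseteq> radical Q \<beta>" using \<beta>0 unfolding radical_def Qorth_def by blast
  qed
  have bne: "\<beta> \<noteq> {0}"
  proof
    assume "\<beta> = {0}"
    then have "gamma Q \<beta> = 0" unfolding gamma_def by simp
    then show False using gamma_pos by simp
  qed
  obtain g where g0: "0 < ereal g" and gg: "ereal g < gamma Q \<beta>"
    using ereal_dense2[OF gamma_pos] by blast
  have gpos: "0 < g" using g0 by simp
  have gb: "\<forall>b\<in>\<beta>. h * Re (Q b b) \<le> - g * (norm b)^2"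
  proof
    fix b assume b: "b \<in> \<beta>"
    show "h * Re (Q b b) \<le> - g * (norm b)^2"
    proof (cases "b = 0")
      case True then show ?thesis using Q00 by simp
    next
      case False
      have "gamma Q \<beta> = Inf {ereal (cmod (Q x x) / (infdist x (radical Q \<beta>))\<^sup>2) | x. x \<in> \<beta> - radical Q \<beta>}"
        unfolding gamma_def using bne by simp
      also have "\<dots> \<le> ereal (cmod (Q b b) / (infdist b (radical Q \<beta>))\<^sup>2)"
        using b False radb by (intro Inf_lower) auto
      also have "infdist b (radical Q \<beta>) = norm b" unfolding radb by (simp add: infdist_singleton)
      finally have "gamma Q \<beta> \<le> ereal (cmod (Q b b) / (norm b)\<^sup>2)" .
      then have "ereal g < ereal (cmod (Q b b) / (norm b)\<^sup>2)" using gg by (rule order.strict_trans2[rotated])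
      then have "g < cmod (Q b b) / (norm b)\<^sup>2" by simp
      then have gl: "g * (norm b)^2 \<le> cmod (Q b b)" using False by (simp add: field_simps)
      have "Q b b = cnj (Q b b)" using bsp_sym[OF QV] b \<beta>(2) by blast
      then have "Im (Q b b) = 0" by (metis complex_cnj_cancel_iff complex_cnj_zero_iff cnj.simps(2) neg_equal_zero)
      then have cm: "cmod (Q b b) = \<bar>Re (Q b b)\<bar>" by (rule cmod_eq_Re)
      have neg: "h * Re (Q b b) < 0" using \<beta>(3) b False by blast
      have "\<bar>h * Re (Q b b)\<bar> = \<bar>Re (Q b b)\<bar>" using hh by (simp add: abs_mult)
      then have "h * Re (Q b b) = - cmod (Q b b)" using neg cm by linarith
      then show ?thesis using gl by linarith
    qed
  qed
  show ?thesis
  proof (cases "cdim \<alpha>")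
    case infinity
    then show ?thesis by (intro exI[of _ 1]) auto
  next
    case (enat n)
    obtain F where F: "finite F" "F \<subseteq> \<alpha>" "card F \<le> n" "\<alpha> \<subseteq> cv.span F"
      using cdim_finite_basis[OF enat] by blast
    define B where "B = F \<union> scaleC \<i> ` F"
    have finB: "finite B" unfolding B_def using F by simp
    have cardB: "card B \<le> 2 * n"
    proof -
      have "card B \<le> card F + card (scaleC \<i> ` F)" unfolding B_def by (rule card_Un_le)
      also have "card (scaleC \<i> ` F) \<le> card F" by (rule card_image_le[OF F(1)])
      finally show ?thesis using F(3) by simp
    qed
    have \<alpha>B: "\<alpha> \<subseteq> span B" unfolding B_def using F(4) cspan_real[OF F(1)] by blast
    have Vne: "V \<noteq> {}" using \<beta>0 \<beta>(2) by blast
    have Vdec: "V \<subseteq> {a + b |a b. a \<in> \<alpha> \<and> b \<in> \<beta>}" using dsum(1) by blast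
    obtain \<epsilon> where \<epsilon>0: "\<epsilon> > 0" and \<epsilon>: "\<forall>R W E d. subspace W \<and> (\<forall>u\<in>W. norm u = 1 \<longrightarrow> infdist u V < \<epsilon>) \<and>
      0 \<le> d \<and> d < \<epsilon> \<and>
      (\<forall>x\<in>V. \<forall>y\<in>V. \<forall>u\<in>W. \<forall>v\<in>W.
        cmod (Q x y - R u v) \<le> d * (norm u + norm x) * (norm v + norm y)
          + c * ((norm u + norm x) * norm (v - y) + norm (u - x) * (norm v + norm y))) \<and>
      finite E \<and> independent E \<and> E \<subseteq> W \<and> card B < card E \<and> (\<forall>t\<in>span E. 0 \<le> h * Re (R t t))
      \<longrightarrow> False"
      using core[where Q=Q and g=g and h=h and c=c and B=B and V=V and \<beta>=\<beta> and \<alpha>=\<alpha>, OF finB \<alpha>B csubspace_real[OF \<beta>c] Vdec \<beta>(2) Vne gpos gb hh c] by blast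
    show ?thesis
    proof (intro exI[of _ \<epsilon>] conjI \<epsilon>0 allI impI)
      fix R W W0
      assume A: "bounded_symmetric_pair R W \<and> closed_csubspace W0 \<and> W0 \<subseteq> radical R W \<and>
           gap_hat V W < \<epsilon> \<and> gap V0 W0 < \<epsilon> \<and> delta_c c Q V R W < \<epsilon>"
      then have RW: "bounded_symmetric_pair R W" and W0: "closed_csubspace W0" "W0 \<subseteq> radical R W"
        and gh: "gap_hat V W < \<epsilon>" and dl: "delta_c c Q V R W < \<epsilon>" by auto
      have Wc: "csubspace W" using bsp_W[OF RW] .
      have Ws: "subspace W" using csubspace_real[OF Wc] .
      have V0in: "0 \<in> V" using Vc unfolding csubspace_def by blast
      have gapW: "\<forall>u\<in>W. norm u = 1 \<longrightarrow> infdist u V < \<epsilon>"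
      proof (intro ballI impI)
        fix u assume u: "u \<in> W" "norm u = 1"
        have "gap W V < \<epsilon>" using gh unfolding gap_hat_def by simp
        moreover have "\<not> W \<subseteq> {0}" using u by auto
        ultimately have lt: "Sup {infdist u V | u. u \<in> W \<and> norm u = 1} < \<epsilon>" unfolding gap_def by simp
        have "infdist u V \<le> Sup {infdist u V | u. u \<in> W \<and> norm u = 1}"
        proof (rule cSup_upper)
          show "infdist u V \<in> {infdist u V | u. u \<in> W \<and> norm u = 1}" using u by blast
          show "bdd_above {infdist u V | u. u \<in> W \<and> norm u = 1}"
          proof (rule bdd_aboveI)
            fix x assume "x \<in> {infdist u V | u. u \<in> W \<and> norm u = 1}"
            then obtain w where w: "x = infdist w V" "norm w = 1" by blast
            have "infdist w V \<le> dist w 0" using infdist_le[OF V0in] .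
            then show "x \<le> 1" using w by simp
          qed
        qed
        then show "infdist u V < \<epsilon>" using lt by linarith
      qed
      obtain d where d: "0 \<le> d" "d < \<epsilon>"
        "\<forall>x\<in>V. \<forall>y\<in>V. \<forall>u\<in>W. \<forall>v\<in>W.
        cmod (Q x y - R u v) \<le> d * (norm u + norm x) * (norm v + norm y)
          + c * ((norm u + norm x) * norm (v - y) + norm (u - x) * (norm v + norm y))"
        using cInf_lessD[OF delta_ne[OF QV RW c] dl[unfolded delta_c_def]] by blast
      have cnt: "card FS + card G \<le> n"
        if S: "csubspace S" "S \<subseteq> W" "\<forall>x\<in>S - {0}. h * Re (R x x) > 0"
          and FS: "finite FS" "FS \<subseteq> S" "cindep_mod {0} FS"
          and G: "finite G" "G \<subseteq> radical R W" "cindep_mod W0 G" for S FS G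
      proof (rule ccontr)
        assume "\<not> card FS + card G \<le> n"
        then have big: "n < card FS + card G" by simp
        obtain E where E: "finite E" "independent E" "E \<subseteq> W" "card E = 2 * (card FS + card G)"
          "\<forall>t\<in>span E. 0 \<le> h * Re (R t t)"
          using key_count[OF RW W0 S FS G] by blast
        have "card B < card E" using E(4) big cardB by presburger
        then show False using spec[OF spec[OF spec[OF spec[OF \<epsilon>, of R], of W], of E], of d] Ws gapW d E by blast
      qed
      show "m_plus h R W + cdim_quot (radical R W) W0 \<le> cdim \<alpha>"
        unfolding enat by (rule sup_part[OF Wc cnt])
    qed
  qed
qed


end
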